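(* Let $\mathcal{H}$ be a real or complex Hilbert space, $\mathcal{F}$ a Hilbert space (with Euclidean norm $\|\cdot\|_{\mathcal{F}}$), $\Sigma\subset\mathcal{H}$ a model set which is either a union of subspaces (UoS) or a cone, and $f:\mathcal{H}\to\mathbb{R}\cup\{+\infty\}$ a regularizer with $f(x)<\infty$ for all $x\in\Sigma$. Let $M:\mathcal{H}\to\mathcal{F}$ be a continuous linear operator satisfying the RIP on $\Sigma-\Sigma$ with constant $\delta<\delta_\Sigma(f)$. Then for every $x_0\in\Sigma$, $x_0$ is the unique minimizer of $$\min_{x\in\mathcal{H}} f(x)\quad\text{subject to}\quad Mx=Mx_0 .$$
   Context: The inner product $\langle\cdot,\cdot\rangle$ on $\mathcal{H}$ is Hermitian, $\|x\|_{\mathcal{H}}^2=\langle x,x\rangle$, and $\mathcal{R}e$ denotes real part. $\Sigma$ is a UoS if $t z\in\Sigma$ for all $t\in\mathbb{R}$, $z\in\Sigma$; a cone if $tz\in\Sigma$ for all $t\ge 0$, $z\in\Sigma$. $\Sigma-\Sigma=\{x-x':x,x'\in\Sigma\}$. $M$ has the RIP on $\Sigma-\Sigma$ with constant $\delta$ if $(1-\delta)\|x\|_{\mathcal{H}}^2\le\|Mx\|_{\mathcal{F}}^2\le(1+\delta)\|x\|_{\mathcal{H}}^2$ for all $x\in\Sigma-\Sigma$. Atomic norm: for a set $\mathcal{A}\subset\mathcal{H}$, $\|x\|_{\mathcal{A}}=\inf\{t\ge0: x\in t\cdot\overline{\mathrm{conv}}(\mathcal{A})\}$ (closure in $\mathcal{H}$),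 with $\|x\|_{\mathcal{A}}=+\infty$ if no such $t$ exists. Set $\|\cdot\|_\Sigma:=\|\cdot\|_{\Sigma\cap S(1)}$ where $S(1)=\{x:\|x\|_{\mathcal{H}}=1\}$. Descent set: $\mathcal{T}_f(\Sigma)=\bigcup_{x\in\Sigma}\{z\in\mathcal{H}: f(x+z)\le f(x)\}$. Admissible constant: $\delta_\Sigma(f):=\inf_{z\in\mathcal{T}_f(\Sigma)\setminus\{0\}}\ \sup_{x\in\Sigma\setminus\{0\}}\delta_\Sigma(x,z)$, where, if $\Sigma$ is a UoS, $$\delta_\Sigma(x,z)=\frac{-\mathcal{R}e\langle x,z\rangle}{\|x\|_{\mathcal{H}}\sqrt{\|x+z\|_\Sigma^2-\|x\|_{\mathcal{H}}^2-2\mathcal{R}e\langle x,z\rangle}},$$ and, if $\Sigma$ is a cone (not a UoS), $$\delta_\Sigma(x,z)=\frac{-2\mathcal{R}e\langle x,z\rangle}{\|x+z\|_\Sigma^2-2\mathcal{R}e\langle x,z\rangle}.$$ (If $\|x+z\|_\Sigma=+\infty$ the quotient is read as $0$.) *)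

theory Defs
  imports "HOL-Analysis.Analysis"
begin

text \<open>Model sets. A union of subspaces (UoS) is closed under all real scalings;
  a cone (library notion \<open>cone\<close>) is closed under nonnegative scalings.\<close>
definition is_UoS :: "'a::real_vector set \<Rightarrow> bool" where
  "is_UoS \<Sigma> \<longleftrightarrow> (\<forall>t::real. \<forall>z\<in>\<Sigma>. t *\<^sub>R z \<in> \<Sigma>)"

definition diff_set :: "'a::ab_group_add set \<Rightarrow> 'a set" where
  "diff_set \<Sigma> = {x - x' | x x'. x \<in> \<Sigma> \<and> x' \<in> \<Sigma>}"

definition RIP :: "('a::real_normed_vector \<Rightarrow> 'b::real_normed_vector) \<Rightarrow> 'a set \<Rightarrow> real \<Rightarrow> bool" where
  "RIP M S \<delta> \<longleftrightarrow> (\<forall>x\<in>S. (1 - \<delta>) * (norm x)\<^sup>2 \<le> (norm (M x))\<^sup>2 \<and>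
                            (norm (M x))\<^sup>2 \<le> (1 + \<delta>) * (norm x)\<^sup>2)"

definition atomic_norm :: "'a::real_normed_vector set \<Rightarrow> 'a \<Rightarrow> ereal" where
  "atomic_norm A x = Inf {ereal t | t. t \<ge> 0 \<and> x \<in> (\<lambda>v. t *\<^sub>R v) ` closure (convex hull A)}"

definition sigma_norm :: "'a::real_normed_vector set \<Rightarrow> 'a \<Rightarrow> ereal" where
  "sigma_norm \<Sigma> x = atomic_norm (\<Sigma> \<inter> {y. norm y = 1}) x"

definition descent_set :: "('a::real_vector \<Rightarrow> ereal) \<Rightarrow> 'a set \<Rightarrow> 'a set" where
  "descent_set f \<Sigma> = (\<Union>x\<in>\<Sigma>. {z. f (x + z) \<le> f x})"

definition delta_pair :: "'a::real_inner set \<Rightarrow> 'a \<Rightarrow> 'a \<Rightarrow> real" where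
  "delta_pair \<Sigma> x z =
     (if sigma_norm \<Sigma> (x + z) = \<infinity> then 0
      else (let N = real_of_ereal (sigma_norm \<Sigma> (x + z)) in
        if is_UoS \<Sigma> then
          - (x \<bullet> z) / (norm x * sqrt (N\<^sup>2 - (norm x)\<^sup>2 - 2 * (x \<bullet> z)))
        else
          - 2 * (x \<bullet> z) / (N\<^sup>2 - 2 * (x \<bullet> z))))"

definition admissible_const :: "'a::real_inner set \<Rightarrow> ('a \<Rightarrow> ereal) \<Rightarrow> ereal" where
  "admissible_const \<Sigma> f =
     (INF z\<in>descent_set f \<Sigma> - {0}. SUP x\<in>\<Sigma> - {0}. ereal (delta_pair \<Sigma> x z))"

end

theory Submission
  imports Defs
begin

definition Gf :: "real \<Rightarrow> real \<Rightarrow> real \<Rightarrow> real \<Rightarrow> real \<Rightarrow> real \<Rightarrow> real \<Rightarrow> real \<Rightarrow> real" where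
  "Gf \<delta> p1 p2 t X Y ix iM =
     (1-\<delta>)*(p1\<^sup>2*X - 2*p1*(t*ix) + t\<^sup>2) - (p1\<^sup>2*Y - 2*p1*(t*iM))
     + (p2\<^sup>2*Y - 2*p2*(t*iM)) - (1+\<delta>)*(p2\<^sup>2*X - 2*p2*(t*ix) + t\<^sup>2)"

lemma Gf_eval: "t*ix = X + a \<Longrightarrow> t*iM = Y \<Longrightarrow>
  Gf \<delta> (1+s) (1-s) t X Y ix iM = -2 * (\<delta> * ((s\<^sup>2 - 1) * X + t\<^sup>2 - 2 * a) + 2 * s * a)"
  unfolding Gf_def by (simp add: power2_eq_square algebra_simps)

lemma neg2_le: "-2 * (e::real) \<le> 0 \<Longrightarrow> 0 \<le> e" by simp

lemma atom_ineq:
  fixes M :: "'a::real_inner \<Rightarrow> 'b::real_inner"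
  assumes lin: "bounded_linear M" and rip: "RIP M (diff_set \<Sigma>) \<delta>"
    and p1x: "p1 *\<^sub>R x \<in> \<Sigma>" and p2x: "p2 *\<^sub>R x \<in> \<Sigma>" and tu: "t *\<^sub>R u \<in> \<Sigma>"
    and nu: "norm u = 1"
  shows "Gf \<delta> p1 p2 t (x \<bullet> x) (M x \<bullet> M x) (x \<bullet> u) (M x \<bullet> M u) \<le> 0"
proof -
  interpret bounded_linear M by fact
  have d1: "p1 *\<^sub>R x - t *\<^sub>R u \<in> diff_set \<Sigma>" using p1x tu unfolding diff_set_def by blast
  have d2: "p2 *\<^sub>R x - t *\<^sub>R u \<in> diff_set \<Sigma>" using p2x tu unfolding diff_set_def by blast
  have r1: "(1 - \<delta>) * (norm (p1 *\<^sub>R x - t *\<^sub>R u))\<^sup>2 \<le> (norm (M (p1 *\<^sub>R x - t *\<^sub>R u)))\<^sup>2"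
    using rip d1 unfolding RIP_def by blast
  have r2: "(norm (M (p2 *\<^sub>R x - t *\<^sub>R u)))\<^sup>2 \<le> (1 + \<delta>) * (norm (p2 *\<^sub>R x - t *\<^sub>R u))\<^sup>2"
    using rip d2 unfolding RIP_def by blast
  have uu: "u \<bullet> u = 1" using nu by (simp add: power2_norm_eq_inner[symmetric])
  have e: "(norm (p *\<^sub>R x - t *\<^sub>R u))\<^sup>2 = p\<^sup>2 * (x \<bullet> x) - 2*p*(t*(x \<bullet> u)) + t\<^sup>2" for p
    unfolding power2_norm_eq_inner by (simp add: inner_diff_left inner_diff_right uu inner_commute[of u x] power2_eq_square algebra_simps)
  have eM: "(norm (M (p *\<^sub>R x - t *\<^sub>R u)))\<^sup>2 = p\<^sup>2 * (M x \<bullet> M x) - 2*p*(t*(M x \<bullet> M u)) + t\<^sup>2 * (M u \<bullet> M u)" for p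
    unfolding power2_norm_eq_inner by (simp add: diff scaleR inner_diff_left inner_diff_right inner_commute[of "M u" "M x"] power2_eq_square algebra_simps)
  show ?thesis using r1 r2 unfolding e eM Gf_def by (simp add: algebra_simps)
qed

lemma Gf_affine:
  "a + b = 1 \<Longrightarrow> Gf \<delta> p1 p2 t X Y (a*i1 + b*i2) (a*j1 + b*j2) =
     a * Gf \<delta> p1 p2 t X Y i1 j1 + b * Gf \<delta> p1 p2 t X Y i2 j2"
proof -
  assume "a + b = 1"
  then have b: "b = 1 - a" by simp
  show ?thesis unfolding Gf_def b by (simp add: algebra_simps)
qed

lemma closure_ineq:
  fixes M :: "'a::real_inner \<Rightarrow> 'b::real_inner"
  assumes lin: "bounded_linear M" and rip: "RIP M (diff_set \<Sigma>) \<delta>"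
    and p1x: "p1 *\<^sub>R x \<in> \<Sigma>" and p2x: "p2 *\<^sub>R x \<in> \<Sigma>"
    and scal: "\<forall>u\<in>\<Sigma>. \<forall>t\<ge>0. t *\<^sub>R u \<in> \<Sigma>" and t: "t \<ge> 0"
    and c: "c \<in> closure (convex hull (\<Sigma> \<inter> {y. norm y = 1}))"
  shows "Gf \<delta> p1 p2 t (x \<bullet> x) (M x \<bullet> M x) (x \<bullet> c) (M x \<bullet> M c) \<le> 0"
proof -
  interpret bounded_linear M by fact
  define S where "S = {u. Gf \<delta> p1 p2 t (x \<bullet> x) (M x \<bullet> M x) (x \<bullet> u) (M x \<bullet> M u) \<le> 0}"
  have A: "\<Sigma> \<inter> {y. norm y = 1} \<subseteq> S"
    using atom_ineq[OF lin rip p1x p2x] scal t unfolding S_def by blast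
  have cv: "convex S"
    unfolding convex_def S_def
  proof (intro allI ballI impI, clarsimp)
    fix u v :: 'a and a b :: real
    assume h: "Gf \<delta> p1 p2 t (x \<bullet> x) (M x \<bullet> M x) (x \<bullet> u) (M x \<bullet> M u) \<le> 0"
       "Gf \<delta> p1 p2 t (x \<bullet> x) (M x \<bullet> M x) (x \<bullet> v) (M x \<bullet> M v) \<le> 0"
       "0 \<le> a" "0 \<le> b" "a + b = 1"
    have "Gf \<delta> p1 p2 t (x \<bullet> x) (M x \<bullet> M x) (x \<bullet> (a *\<^sub>R u + b *\<^sub>R v)) (M x \<bullet> M (a *\<^sub>R u + b *\<^sub>R v))
       = a * Gf \<delta> p1 p2 t (x \<bullet> x) (M x \<bullet> M x) (x \<bullet> u) (M x \<bullet> M u) + b * Gf \<delta> p1 p2 t (x \<bullet> x) (M x \<bullet> M x) (x \<bullet> v) (M x \<bullet> M v)"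
      using Gf_affine[OF h(5)] by (simp add: add scaleR inner_add_right)
    also have "\<dots> \<le> 0" using h by (simp add: add_nonpos_nonpos mult_nonneg_nonpos)
    finally show "Gf \<delta> p1 p2 t (x \<bullet> x) (M x \<bullet> M x) (x \<bullet> (a *\<^sub>R u + b *\<^sub>R v)) (M x \<bullet> M (a *\<^sub>R u + b *\<^sub>R v)) \<le> 0" .
  qed
  have contM: "continuous_on UNIV M" by (rule linear_continuous_on[OF lin])
  have cl: "closed S"
    unfolding S_def Gf_def
    by (intro closed_Collect_le continuous_intros continuous_on_compose2[OF contM]) auto
  have "convex hull (\<Sigma> \<inter> {y. norm y = 1}) \<subseteq> S" using hull_minimal[of _ S convex] A cv by blast
  then have "closure (convex hull (\<Sigma> \<inter> {y. norm y = 1})) \<subseteq> S"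
    using cl closure_minimal by blast
  then show ?thesis using c unfolding S_def by blast
qed


lemma key:
  fixes \<Sigma> :: "'a::real_inner set" and M :: "'a \<Rightarrow> 'b::real_inner"
  assumes model: "is_UoS \<Sigma> \<or> cone \<Sigma>" and lin: "bounded_linear M"
    and rip: "RIP M (diff_set \<Sigma>) \<delta>" and x: "x \<in> \<Sigma>" "x \<noteq> 0" and z: "z \<noteq> 0" "M z = 0"
  shows "delta_pair \<Sigma> x z \<le> \<delta>"
proof -
  interpret bounded_linear M by fact
  have scal: "\<forall>u\<in>\<Sigma>. \<forall>t\<ge>0. t *\<^sub>R u \<in> \<Sigma>"
    using model unfolding is_UoS_def cone_def by auto
  have zero: "0 \<in> \<Sigma>" using scal x(1) by (metis order_refl scale_zero_left)
  have dpos: "\<delta> \<ge> 0"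
  proof (rule ccontr)
    assume "\<not> \<delta> \<ge> 0"
    have "x - 0 \<in> diff_set \<Sigma>" using x zero unfolding diff_set_def by blast
    then have "(1 - \<delta>) * (norm x)\<^sup>2 \<le> (1 + \<delta>) * (norm x)\<^sup>2"
      using rip unfolding RIP_def by fastforce
    moreover have "(norm x)\<^sup>2 > 0" using x by simp
    ultimately show False using \<open>\<not> \<delta> \<ge> 0\<close> by (simp add: mult_le_cancel_right)
  qed
  define A where "A = \<Sigma> \<inter> {y. norm y = 1}"
  define C where "C = closure (convex hull A)"
  define w where "w = x + z"
  define T where "T = {t. t \<ge> 0 \<and> w \<in> (\<lambda>v. t *\<^sub>R v) ` C}"
  define X where "X = x \<bullet> x"
  define a where "a = x \<bullet> z"
  have sn: "sigma_norm \<Sigma> w = Inf (ereal ` T)"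
    unfolding sigma_norm_def atomic_norm_def T_def C_def A_def by (rule arg_cong[where f=Inf]) auto
  show ?thesis
  proof (cases "T = {}")
    case True
    then have "sigma_norm \<Sigma> (x + z) = \<infinity>" using sn unfolding w_def by (simp add: top_ereal_def)
    then show ?thesis using dpos unfolding delta_pair_def by simp
  next
    case False
    have bdd: "bdd_below T" unfolding T_def by (rule bdd_belowI[of _ 0]) auto
    define N where "N = Inf T"
    have snN: "sigma_norm \<Sigma> (x + z) = ereal N"
      using sn ereal_Inf'[OF bdd False] unfolding N_def w_def by simp
    have F: "0 \<le> \<delta> * ((s\<^sup>2 - 1) * X + t\<^sup>2 - 2 * a) + 2 * s * a"
      if t: "t \<in> T" and s1: "(1 + s) *\<^sub>R x \<in> \<Sigma>" and s2: "(1 - s) *\<^sub>R x \<in> \<Sigma>" for t s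
    proof -
      from t obtain c where t0: "t \<ge> 0" and c: "c \<in> C" and wc: "w = t *\<^sub>R c" unfolding T_def by auto
      have G: "Gf \<delta> (1+s) (1-s) t (x \<bullet> x) (M x \<bullet> M x) (x \<bullet> c) (M x \<bullet> M c) \<le> 0"
        using closure_ineq[OF lin rip s1 s2 scal t0] c unfolding C_def A_def by blast
      have e1: "t * (x \<bullet> c) = X + a"
      proof -
        have "x \<bullet> w = t * (x \<bullet> c)" using wc by simp
        moreover have "x \<bullet> w = X + a" unfolding w_def X_def a_def by (simp add: inner_add_right)
        ultimately show ?thesis by simp
      qed
      have e2: "t * (M x \<bullet> M c) = M x \<bullet> M x"
      proof -
        have "M x \<bullet> M w = t * (M x \<bullet> M c)" using wc by (simp add: scaleR)
        moreover have "M w = M x" unfolding w_def using z by (simp add: add)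
        ultimately show ?thesis by simp
      qed
      have "Gf \<delta> (1+s) (1-s) t (x \<bullet> x) (M x \<bullet> M x) (x \<bullet> c) (M x \<bullet> M c)
          = -2 * (\<delta> * ((s\<^sup>2 - 1) * X + t\<^sup>2 - 2 * a) + 2 * s * a)"
        unfolding X_def[symmetric] by (rule Gf_eval[OF e1 e2])
      then have "-2 * (\<delta> * ((s\<^sup>2 - 1) * X + t\<^sup>2 - 2 * a) + 2 * s * a) \<le> 0" using G by metis
      then show ?thesis by (rule neg2_le)
    qed
    have FN: "0 \<le> \<delta> * ((s\<^sup>2 - 1) * X + N\<^sup>2 - 2 * a) + 2 * s * a"
      if s1: "(1 + s) *\<^sub>R x \<in> \<Sigma>" and s2: "(1 - s) *\<^sub>R x \<in> \<Sigma>" for s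
    proof -
      define K where "K = {t. (\<lambda>t. 0) t \<le> (\<lambda>t. \<delta> * ((s\<^sup>2 - 1) * X + t\<^sup>2 - 2 * a) + 2 * s * a) t}"
      have "closed K" unfolding K_def by (intro closed_Collect_le continuous_intros)
      moreover have "T \<subseteq> K" using F[OF _ s1 s2] unfolding K_def by auto
      ultimately have "closure T \<subseteq> K" by (simp add: closure_minimal)
      moreover have "N \<in> closure T" unfolding N_def by (rule closure_contains_Inf[OF False bdd])
      ultimately show ?thesis unfolding K_def by auto
    qed
    have Cb: "C \<subseteq> cball 0 1"
    proof -
      have "A \<subseteq> cball 0 1" unfolding A_def by auto
      then have "convex hull A \<subseteq> cball 0 1"
        using hull_minimal[of A "cball 0 1" convex] convex_cball by blast
      then show ?thesis unfolding C_def using closure_minimal closed_cball by blast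
    qed
    have wN: "norm w \<le> N" unfolding N_def
    proof (rule cInf_greatest[OF False])
      fix t assume "t \<in> T"
      then obtain c where t0: "t \<ge> 0" and c: "c \<in> C" and wc: "w = t *\<^sub>R c" unfolding T_def by auto
      have "norm c \<le> 1" using c Cb by auto
      then show "norm w \<le> t" using wc t0 by (simp add: mult_left_le)
    qed
    have nw2: "(norm w)\<^sup>2 = X + 2 * a + z \<bullet> z"
      unfolding power2_norm_eq_inner w_def X_def a_def
      by (simp add: inner_add_left inner_add_right inner_commute[of z x])
    have zz: "z \<bullet> z > 0" using z by simp
    define R where "R = N\<^sup>2 - (norm x)\<^sup>2 - 2 * (x \<bullet> z)"
    have Xn: "X = (norm x)\<^sup>2" unfolding X_def by (simp add: power2_norm_eq_inner)
    have "(norm w)\<^sup>2 \<le> N\<^sup>2" using wN by (simp add: power_mono)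
    then have Rpos: "R > 0" unfolding R_def using nw2 zz Xn a_def by linarith
    have nx: "norm x > 0" using x by simp
    show ?thesis
    proof (cases "is_UoS \<Sigma>")
      case True
      define q where "q = sqrt R"
      have q: "q > 0" "q\<^sup>2 = R" using Rpos unfolding q_def by auto
      define s where "s = q / norm x"
      have "0 \<le> \<delta> * ((s\<^sup>2 - 1) * X + N\<^sup>2 - 2 * a) + 2 * s * a"
        by (rule FN) (use True x(1) in \<open>auto simp: is_UoS_def\<close>)
      moreover have "(s\<^sup>2 - 1) * X + N\<^sup>2 - 2 * a = 2 * R"
        unfolding s_def Xn R_def a_def using nx q(2)[symmetric] unfolding R_def
        by (simp add: power_divide field_simps)
      ultimately have "0 \<le> \<delta> * (2 * q\<^sup>2) + 2 * (q / norm x) * a" using q s_def by simp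
      then have "0 \<le> (norm x / (2 * q)) * (\<delta> * (2 * q\<^sup>2) + 2 * (q / norm x) * a)"
        using q nx by simp
      also have "\<dots> = \<delta> * (norm x * q) + a"
        using q nx by (simp add: field_simps power2_eq_square)
      finally have ineq: "- a \<le> \<delta> * (norm x * q)" by simp
      have "delta_pair \<Sigma> x z = - a / (norm x * q)"
        using snN True unfolding delta_pair_def q_def R_def a_def by (simp add: Let_def)
      also have "\<dots> \<le> \<delta>"
      proof -
        have pos: "norm x * q > 0" using q nx by simp
        show ?thesis using pos_divide_le_eq[OF pos, of "-a" \<delta>] ineq by (simp only: mult.commute)
      qed
      finally show ?thesis .
    next
      case False
      then have cn: "cone \<Sigma>" using model by simp
      have "0 \<le> \<delta> * ((1\<^sup>2 - 1) * X + N\<^sup>2 - 2 * a) + 2 * 1 * a"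
        by (rule FN) (use cn x(1) zero in \<open>auto simp: cone_def\<close>)
      then have ineq: "-2 * a \<le> \<delta> * (N\<^sup>2 - 2 * a)" by simp
      have "(norm x)\<^sup>2 \<ge> 0" by simp
      then have den: "N\<^sup>2 - 2 * a > 0" using Rpos unfolding R_def a_def by linarith
      have "delta_pair \<Sigma> x z = - 2 * a / (N\<^sup>2 - 2 * a)"
        using snN False unfolding delta_pair_def a_def by (simp add: Let_def)
      also have "\<dots> \<le> \<delta>" using pos_divide_le_eq[OF den, of "-2*a" \<delta>] ineq by (simp only: mult.commute)
      finally show ?thesis .
    qed
  qed
qed


theorem theorem1:
  fixes \<Sigma> :: "'a::{real_inner, complete_space} set"
    and f :: "'a \<Rightarrow> ereal"
    and M :: "'a \<Rightarrow> 'b::{real_inner, complete_space}"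
    and \<delta> :: real
  assumes model: "is_UoS \<Sigma> \<or> cone \<Sigma>"
    and f_range: "\<forall>x. f x \<noteq> -\<infinity>"
    and f_fin: "\<forall>x\<in>\<Sigma>. f x < \<infinity>"
    and M_lin: "bounded_linear M"
    and rip: "RIP M (diff_set \<Sigma>) \<delta>"
    and small: "ereal \<delta> < admissible_const \<Sigma> f"
  shows "\<forall>x0\<in>\<Sigma>. (\<forall>x. M x = M x0 \<longrightarrow> f x0 \<le> f x) \<and>
                  (\<forall>x. M x = M x0 \<and> x \<noteq> x0 \<longrightarrow> f x0 < f x)"
proof
  fix x0 assume x0: "x0 \<in> \<Sigma>"
  have strict: "f x0 < f x" if hx: "M x = M x0" "x \<noteq> x0" for x
  proof (rule ccontr)
    assume "\<not> f x0 < f x"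
    then have le: "f (x0 + (x - x0)) \<le> f x0" by simp
    define z where "z = x - x0"
    have z0: "z \<noteq> 0" using hx unfolding z_def by simp
    have Mz: "M z = 0" using hx unfolding z_def using linear_diff[OF bounded_linear.linear[OF M_lin]] by simp
    have "z \<in> descent_set f \<Sigma> - {0}" unfolding descent_set_def using le x0 z0 unfolding z_def by blast
    then have "admissible_const \<Sigma> f \<le> (SUP x'\<in>\<Sigma> - {0}. ereal (delta_pair \<Sigma> x' z))"
      unfolding admissible_const_def by (rule INF_lower)
    then have "ereal \<delta> < (SUP x'\<in>\<Sigma> - {0}. ereal (delta_pair \<Sigma> x' z))" using small by simp
    then obtain x' where x': "x' \<in> \<Sigma> - {0}" and lt: "ereal \<delta> < ereal (delta_pair \<Sigma> x' z)"
      by (auto simp: less_SUP_iff)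
    have "delta_pair \<Sigma> x' z \<le> \<delta>" using key[OF model M_lin rip _ _ z0 Mz] x' by auto
    then show False using lt by simp
  qed
  show "(\<forall>x. M x = M x0 \<longrightarrow> f x0 \<le> f x) \<and> (\<forall>x. M x = M x0 \<and> x \<noteq> x0 \<longrightarrow> f x0 < f x)"
    using strict by (metis order_refl less_imp_le)
qed

end
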